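(* Let $d,n,m\geq1$ be integers, and let $\mathsf{M}_1$ be an $n$-outcome POVM and $\mathsf{M}_2$ an $m$-outcome POVM on $\mathbb{C}^d$, with $$\bar P(\mathsf{M}_1,\mathsf{M}_2)=\frac{1}{2nm}\sum_{x=1}^n\sum_{y=1}^m\big\|\mathsf{M}_1(x)+\mathsf{M}_2(y)\big\|>\frac12\left(1+\frac{d}{nm}\right).$$ Then the joint measurability degree satisfies $$\mathsf{j}(\mathsf{M}_1,\mathsf{M}_2)\leq\frac{d+nm-(n+m)}{2nm\,\bar P(\mathsf{M}_1,\mathsf{M}_2)-(n+m)}.$$
   Context: $\|\cdot\|$ is the operator norm and $I$ the identity on $\mathbb{C}^d$. Two POVMs are compatible if there exists a POVM $\mathsf{G}(x,y)$ with marginals $\sum_y\mathsf{G}(x,y)=$ first POVM and $\sum_x\mathsf{G}(x,y)=$ second POVM. The joint measurability degree is $\mathsf{j}(\mathsf{M}_1,\mathsf{M}_2)=\max\{t\geq0 : \{t\mathsf{M}_i+(1-t)p_iI\}_{i=1,2}$ are compatible for some probability distributions $p_1$ on $\{1,\dots,n\}$ and $p_2$ on $\{1,\dots,m\}\}$. *)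

theory Defs
  imports "HOL-Analysis.Analysis"
begin

text \<open>Operators on C^d are represented as matrices of type complex^'d^'d,
  where d = CARD('d). The space complex^'d carries the Euclidean norm.\<close>

definition op_norm :: "complex^'d^'d \<Rightarrow> real" where
  "op_norm A = onorm (\<lambda>v::complex^'d. A *v v)"

definition psd :: "complex^'d^'d \<Rightarrow> bool" where
  "psd A \<longleftrightarrow> (\<forall>v::complex^'d.
     let q = (\<Sum>i\<in>UNIV. \<Sum>j\<in>UNIV. cnj (v$i) * A$i$j * v$j) in Im q = 0 \<and> Re q \<ge> 0)"

definition povm :: "'a set \<Rightarrow> ('a \<Rightarrow> complex^'d^'d) \<Rightarrow> bool" where
  "povm X M \<longleftrightarrow> finite X \<and> (\<forall>x\<in>X. psd (M x)) \<and> (\<Sum>x\<in>X. M x) = mat 1"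

definition compatible ::
  "nat \<Rightarrow> nat \<Rightarrow> (nat \<Rightarrow> complex^'d^'d) \<Rightarrow> (nat \<Rightarrow> complex^'d^'d) \<Rightarrow> bool" where
  "compatible n m A B \<longleftrightarrow> (\<exists>G :: nat \<times> nat \<Rightarrow> complex^'d^'d.
     povm ({1..n} \<times> {1..m}) G \<and>
     (\<forall>x\<in>{1..n}. (\<Sum>y\<in>{1..m}. G (x, y)) = A x) \<and>
     (\<forall>y\<in>{1..m}. (\<Sum>x\<in>{1..n}. G (x, y)) = B y))"

definition prob_dist :: "nat \<Rightarrow> (nat \<Rightarrow> real) \<Rightarrow> bool" where
  "prob_dist n p \<longleftrightarrow> (\<forall>x\<in>{1..n}. 0 \<le> p x) \<and> (\<Sum>x\<in>{1..n}. p x) = 1"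

definition noisy :: "real \<Rightarrow> (nat \<Rightarrow> real) \<Rightarrow> (nat \<Rightarrow> complex^'d^'d) \<Rightarrow> nat \<Rightarrow> complex^'d^'d" where
  "noisy t p M x = t *\<^sub>R M x + ((1 - t) * p x) *\<^sub>R mat 1"

definition jm_set :: "nat \<Rightarrow> nat \<Rightarrow> (nat \<Rightarrow> complex^'d^'d) \<Rightarrow> (nat \<Rightarrow> complex^'d^'d) \<Rightarrow> real set" where
  "jm_set n m M1 M2 = {t. t \<ge> 0 \<and> (\<exists>p1 p2. prob_dist n p1 \<and> prob_dist m p2 \<and>
       compatible n m (noisy t p1 M1) (noisy t p2 M2))}"

text \<open>Joint measurability degree (the paper's max, written as Sup).\<close>
definition jm_degree :: "nat \<Rightarrow> nat \<Rightarrow> (nat \<Rightarrow> complex^'d^'d) \<Rightarrow> (nat \<Rightarrow> complex^'d^'d) \<Rightarrow> real" where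
  "jm_degree n m M1 M2 = Sup (jm_set n m M1 M2)"

definition Pbar :: "nat \<Rightarrow> nat \<Rightarrow> (nat \<Rightarrow> complex^'d^'d) \<Rightarrow> (nat \<Rightarrow> complex^'d^'d) \<Rightarrow> real" where
  "Pbar n m M1 M2 = (1 / (2 * real n * real m)) *
     (\<Sum>x\<in>{1..n}. \<Sum>y\<in>{1..m}. op_norm (M1 x + M2 y))"

end

theory Submission
  imports Defs
begin

definition cq :: "complex^'d^'d \<Rightarrow> complex^'d \<Rightarrow> complex^'d \<Rightarrow> complex" where
  "cq A u v = (\<Sum>i\<in>UNIV. cnj (u$i) * (A *v v)$i)"

lemma mv_scaleR: "(A::complex^'d^'d) *v (r *\<^sub>R v) = r *\<^sub>R (A *v v)"
  by (simp add: vec_eq_iff matrix_vector_mult_def scaleR_sum_right)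

lemma mv_scaleC: "(A::complex^'d^'d) *v (c *s v) = c *s (A *v v)"
  by (simp add: vec_eq_iff matrix_vector_mult_def sum_distrib_left algebra_simps)

lemma mv_linear: "linear (\<lambda>v. (A::complex^'d^'d) *v v)"
  by (rule linearI) (simp_all add: matrix_vector_right_distrib mv_scaleR)

lemma mv_bl: "bounded_linear (\<lambda>v. (A::complex^'d^'d) *v v)"
  using mv_linear linear_conv_bounded_linear by blast

lemma psd_cq: "psd A \<longleftrightarrow> (\<forall>v. Im (cq A v v) = 0 \<and> Re (cq A v v) \<ge> 0)"
proof -
  have "(\<Sum>i\<in>UNIV. \<Sum>j\<in>UNIV. cnj (v$i) * A$i$j * v$j) = cq A v v" for v
    by (simp add: cq_def matrix_vector_mult_def sum_distrib_left mult.assoc)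
  then show ?thesis by (simp add: psd_def Let_def)
qed

lemma Re_cq: "Re (cq A u v) = inner u (A *v v)"
  by (simp add: cq_def inner_vec_def inner_complex_def)

lemma cq_add_l: "cq A (u + w) v = cq A u v + cq A w v"
  by (simp add: cq_def sum.distrib algebra_simps)
lemma cq_add_r: "cq A u (v + w) = cq A u v + cq A u w"
  by (simp add: cq_def sum.distrib algebra_simps matrix_vector_right_distrib)
lemma cq_sc_l: "cq A (c *s u) v = cnj c * cq A u v"
  by (simp add: cq_def sum_distrib_left algebra_simps)
lemma cq_sc_r: "cq A u (c *s v) = c * cq A u v"
  by (simp add: cq_def sum_distrib_left algebra_simps mv_scaleC)
lemma cq_addA: "cq (A + B) u v = cq A u v + cq B u v"
  by (simp add: cq_def sum.distrib algebra_simps matrix_vector_mult_add_rdistrib)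

lemma psd_sym:
  assumes "psd A"
  shows "inner u (A *v v) = inner v (A *v u)"
proof -
  have h: "Im (cq A w w) = 0" for w using assms psd_cq by blast
  have 1: "Im (cq A u v + cq A v u) = 0"
    using h[of "u+v"] h[of u] h[of v] by (simp add: cq_add_l cq_add_r)
  have 2: "Re (cq A u v) = Re (cq A v u)"
    using h[of "u + \<i> *s v"] h[of u] h[of v] by (simp add: cq_add_l cq_add_r cq_sc_l cq_sc_r)
  show ?thesis using 2 by (simp add: Re_cq)
qed


lemma psd_Q: "psd A \<Longrightarrow> 0 \<le> inner v (A *v v)"
  using psd_cq Re_cq by metis

lemma discr:
  fixes a c e :: real
  assumes "\<And>s. 0 \<le> a + 2 * s * c + s^2 * e" and e0: "e \<ge> 0"
  shows "c^2 \<le> a * e"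
proof (cases "e = 0")
  case True
  have "c = 0"
  proof (rule ccontr)
    assume "c \<noteq> 0"
    have "0 \<le> a + 2 * (- (a + 1) / (2 * c)) * c" using assms(1)[of "- (a + 1) / (2 * c)"] True by simp
    also have "\<dots> = -1" using \<open>c \<noteq> 0\<close> by (simp add: field_simps)
    finally show False by simp
  qed
  then show ?thesis using True by simp
next
  case False
  have "0 \<le> a + 2 * (- c / e) * c + (- c / e)^2 * e" using assms by blast
  also have "\<dots> = a - c^2 / e" using False by (simp add: field_simps power2_eq_square)
  finally show ?thesis using e0 False by (simp add: field_simps)
qed


lemma psd_CS:
  assumes "psd A"
  shows "(inner u (A *v v))^2 \<le> inner u (A *v u) * inner v (A *v v)"
proof (rule discr)
  fix s :: real
  have "0 \<le> inner (u + s *\<^sub>R v) (A *v (u + s *\<^sub>R v))" using psd_Q[OF assms] .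
  also have "\<dots> = inner u (A *v u) + s * inner u (A *v v) + s * inner v (A *v u) + s^2 * inner v (A *v v)"
    by (simp add: matrix_vector_right_distrib mv_scaleR inner_add_left inner_add_right power2_eq_square algebra_simps)
  also have "\<dots> = inner u (A *v u) + 2 * s * inner u (A *v v) + s^2 * inner v (A *v v)"
    using psd_sym[OF assms, of v u] by simp
  finally show "0 \<le> inner u (A *v u) + 2 * s * inner u (A *v v) + s^2 * inner v (A *v v)" .
  show "0 \<le> inner v (A *v v)" using psd_Q[OF assms] .
qed

lemma unit_exists: "\<exists>v::complex^'d. norm v = 1"
proof -
  have "inner (axis undefined (1::complex)) (axis undefined 1 :: complex^'d) = 1" by (simp add: inner_axis_axis)
  then show ?thesis by (metis norm_eq_sqrt_inner real_sqrt_one)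
qed

lemma opnorm_le_form:
  fixes A :: "complex^'d^'d"
  assumes "psd A" and le: "\<And>v. inner v (A *v v) \<le> S * (norm v)^2"
  shows "op_norm A \<le> S"
proof -
  obtain v0 :: "complex^'d" where v0: "norm v0 = 1" using unit_exists by blast
  have S0: "S \<ge> 0" using le[of v0] psd_Q[OF assms(1), of v0] v0 by simp
  show ?thesis unfolding op_norm_def
  proof (rule onorm_le)
    fix v :: "complex^'d"
    define w where "w = A *v v"
    have "(norm w ^ 2)^2 = (inner w (A *v v))^2" by (simp add: w_def power2_norm_eq_inner)
    also have "\<dots> \<le> inner w (A *v w) * inner v (A *v v)" using psd_CS[OF assms(1)] .
    also have "\<dots> \<le> (S * norm w ^2) * (S * norm v^2)"
      using le[of w] le[of v] psd_Q[OF assms(1), of w] psd_Q[OF assms(1), of v]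
      by (simp add: mult_mono)
    finally have h: "(norm w ^ 2)^2 \<le> (S * norm w ^2) * (S * norm v^2)" .
    show "norm (A *v v) \<le> S * norm v"
    proof (cases "w = 0")
      case True then show ?thesis using S0 by (simp add: w_def)
    next
      case False
      hence "norm w ^2 > 0" by simp
      have "norm w ^ 2 * norm w ^ 2 \<le> (S * S * norm v ^2) * norm w ^ 2"
        using h by (simp add: power2_eq_square algebra_simps)
      hence "norm w ^ 2 \<le> S * S * norm v ^2"
        using \<open>norm w ^2 > 0\<close> by (metis mult_right_le_imp_le)
      hence "norm w ^2 \<le> (S * norm v)^2" by (simp add: power2_eq_square algebra_simps)
      hence "norm w \<le> S * norm v" by (rule power2_le_imp_le) (simp add: S0)
      then show ?thesis by (simp add: w_def)
    qed
  qed
qed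

definition tr :: "complex^'d^'d \<Rightarrow> real" where
  "tr A = (\<Sum>i\<in>UNIV. Re (A$i$i))"

lemma psd_diag: "psd A \<Longrightarrow> 0 \<le> Re (A$i$i)"
proof -
  assume "psd A"
  have "(A *v axis i 1)$i = A$i$i" by (simp add: matrix_vector_mult_def axis_def if_distrib[where f="\<lambda>x. _ * x"] cong: if_cong)
  then show ?thesis using psd_Q[OF \<open>psd A\<close>, of "axis i 1"] by (simp add: inner_axis')
qed

lemma opnorm_le_tr:
  fixes G :: "complex^'d^'d"
  assumes "psd G"
  shows "op_norm G \<le> tr G"
  unfolding op_norm_def
proof (rule onorm_le)
  fix v :: "complex^'d"
  define w where "w = G *v v"
  have tr0: "tr G \<ge> 0" unfolding tr_def by (rule sum_nonneg) (use psd_diag[OF assms] in auto)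
  have comp: "(cmod (w$i))^2 \<le> Re (G$i$i) * inner v (G *v v)" for i
  proof (cases "w$i = 0")
    case True then show ?thesis using psd_diag[OF assms] psd_Q[OF assms] by simp
  next
    case False
    define om where "om = (1 / cmod (w$i)) *\<^sub>R (w$i)"
    have nom: "cmod om = 1" using False by (simp add: om_def)
    have "inner (axis i om) w = cmod (w$i)"
      using False by (simp add: inner_axis' om_def power2_norm_eq_inner[symmetric] power2_eq_square)
    hence "(cmod (w$i))^2 = (inner (axis i om) (G *v v))^2" by (simp add: w_def)
    also have "\<dots> \<le> inner (axis i om) (G *v axis i om) * inner v (G *v v)" using psd_CS[OF assms] .
    also have "inner (axis i om) (G *v axis i om) = Re (G$i$i)"
    proof -
      have "(G *v axis i om)$i = G$i$i * om" by (simp add: matrix_vector_mult_def axis_def if_distrib[where f="\<lambda>x. _ * x"] cong: if_cong)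
      hence "inner (axis i om) (G *v axis i om) = Re (cnj om * (G$i$i * om))"
        by (simp add: inner_axis' inner_complex_def)
      also have "\<dots> = Re (G$i$i) * (cmod om)^2"
      proof -
        have "cnj om * (G$i$i * om) = G$i$i * (om * cnj om)" by (simp add: algebra_simps)
        also have "\<dots> = G$i$i * complex_of_real ((cmod om)^2)" by (simp add: complex_mult_cnj cmod_power2)
        finally have eq: "cnj om * (G$i$i * om) = G$i$i * complex_of_real ((cmod om)^2)" .
        show ?thesis unfolding eq by simp
      qed
      finally show ?thesis using nom by simp
    qed
    finally show ?thesis .
  qed
  have "norm w ^2 = (\<Sum>i\<in>UNIV. (cmod (w$i))^2)"
    by (simp add: power2_norm_eq_inner inner_vec_def)
  also have "\<dots> \<le> (\<Sum>i\<in>UNIV. Re (G$i$i) * inner v (G *v v))" by (rule sum_mono) (rule comp)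
  also have "\<dots> = tr G * inner v w" by (simp add: tr_def sum_distrib_right w_def)
  also have "\<dots> \<le> tr G * (norm v * norm w)" using tr0 norm_cauchy_schwarz[of v w] by (rule mult_left_mono[rotated])
  finally have h: "norm w ^2 \<le> tr G * (norm v * norm w)" .
  show "norm (G *v v) \<le> tr G * norm v"
  proof (cases "w = 0")
    case True then show ?thesis using tr0 by (simp add: w_def)
  next
    case False
    hence "norm w > 0" by simp
    with h show ?thesis by (simp add: w_def power2_eq_square algebra_simps)
  qed
qed


lemma smat_mv: "((t::real) *\<^sub>R (A::complex^'d^'d)) *v v = t *\<^sub>R (A *v v)"
  by (simp add: vec_eq_iff matrix_vector_mult_def scaleR_sum_right)

lemma cq_zeroA: "cq 0 u v = 0"
  by (simp add: cq_def)

lemma cq_scaleRA: "cq (c *\<^sub>R A) u v = of_real c * cq A u v"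
  proof -
  have "(c *\<^sub>R (A *v v))$i = complex_of_real c * (A *v v)$i" for i
    by (metis scaleR_conv_of_real vector_scaleR_component)
  then show ?thesis unfolding cq_def smat_mv by (simp add: sum_distrib_left algebra_simps)
qed

lemma psd_add: "psd A \<Longrightarrow> psd B \<Longrightarrow> psd (A + B)"
  by (simp add: psd_cq cq_addA)

lemma psd_scaleR: "psd A \<Longrightarrow> c \<ge> 0 \<Longrightarrow> psd (c *\<^sub>R A)"
  by (simp add: psd_cq cq_scaleRA)

lemma psd_zero: "psd 0"
  by (simp add: psd_cq cq_zeroA)

lemma psd_sum: "finite S \<Longrightarrow> (\<And>x. x \<in> S \<Longrightarrow> psd (f x)) \<Longrightarrow> psd (\<Sum>x\<in>S. f x)"
  by (induction S rule: finite_induct) (auto simp: psd_zero psd_add)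

lemma psd_id: "psd (mat 1)"
proof -
  have "cq (mat 1) v v = complex_of_real (\<Sum>i\<in>UNIV. (cmod (v$i))^2)" for v :: "complex^'d"
    unfolding cq_def matrix_vector_mul_lid of_real_sum by (rule sum.cong) (simp_all add: complex_norm_square mult.commute del: of_real_power)
  then show ?thesis unfolding psd_cq by (metis Im_complex_of_real Re_complex_of_real sum_nonneg zero_le_power2)
qed


lemma opnorm_upper:
  fixes G H :: "complex^'d^'d"
  assumes "psd G" "psd H" "psd (mat 1 - H)"
  shows "op_norm (G + H) \<le> tr G + 1"
proof -
  have H1: "op_norm H \<le> 1"
  proof (rule opnorm_le_form[OF assms(2)])
    fix v :: "complex^'d"
    have "0 \<le> inner v ((mat 1 - H) *v v)" using psd_Q[OF assms(3)] .
    also have "\<dots> = inner v v - inner v (H *v v)"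
      by (simp add: matrix_vector_mult_diff_rdistrib inner_diff_right)
    finally show "inner v (H *v v) \<le> 1 * (norm v)^2" by (simp add: power2_norm_eq_inner)
  qed
  have "op_norm (G + H) = onorm (\<lambda>v. G *v v + H *v v)"
    by (simp add: op_norm_def matrix_vector_mult_add_rdistrib)
  also have "\<dots> \<le> op_norm G + op_norm H"
    unfolding op_norm_def by (rule onorm_triangle[OF mv_bl mv_bl])
  finally show ?thesis using H1 opnorm_le_tr[OF assms(1)] by linarith
qed

lemma opnorm_lower:
  fixes A :: "complex^'d^'d"
  assumes "psd A" "t > 0"
  shows "t * op_norm A + c \<le> op_norm (t *\<^sub>R A + c *\<^sub>R mat 1)"
proof -
  define B where "B = t *\<^sub>R A + c *\<^sub>R mat 1"
  have "op_norm A \<le> (op_norm B - c) / t"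
  proof (rule opnorm_le_form[OF assms(1)])
    fix v :: "complex^'d"
    have "t * inner v (A *v v) + c * (norm v)^2 = inner v (B *v v)"
      by (simp add: B_def matrix_vector_mult_add_rdistrib smat_mv inner_add_right power2_norm_eq_inner)
    also have "\<dots> \<le> norm v * norm (B *v v)" by (rule norm_cauchy_schwarz)
    also have "\<dots> \<le> norm v * (op_norm B * norm v)"
      unfolding op_norm_def by (rule mult_left_mono[OF onorm[OF mv_bl]]) simp
    finally have "t * inner v (A *v v) \<le> (op_norm B - c) * (norm v)^2"
      by (simp add: power2_eq_square algebra_simps)
    then show "inner v (A *v v) \<le> (op_norm B - c) / t * (norm v)^2"
      using assms(2) by (simp add: field_simps)
  qed
  then show ?thesis using assms(2) by (simp add: B_def field_simps)
qed

lemma tr_sum: "finite S \<Longrightarrow> tr (\<Sum>x\<in>S. f x) = (\<Sum>x\<in>S. tr (f x))"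
  unfolding tr_def by (simp add: sum_component Re_sum sum.swap[of _ UNIV])

lemma tr_id: "tr (mat 1 :: complex^'d^'d) = real CARD('d)"
  by (simp add: tr_def mat_def)


lemma jm_zero:
  fixes M1 M2 :: "nat \<Rightarrow> complex^'d^'d"
  assumes "n \<ge> 1" "m \<ge> 1"
  shows "0 \<in> jm_set n m M1 M2"
proof -
  define p1 :: "nat \<Rightarrow> real" where "p1 = (\<lambda>_. 1 / real n)"
  define p2 :: "nat \<Rightarrow> real" where "p2 = (\<lambda>_. 1 / real m)"
  define G :: "nat \<times> nat \<Rightarrow> complex^'d^'d" where "G = (\<lambda>_. (1 / (real n * real m)) *\<^sub>R mat 1)"
  have pd1: "prob_dist n p1" using assms by (simp add: prob_dist_def p1_def)
  have pd2: "prob_dist m p2" using assms by (simp add: prob_dist_def p2_def)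
  have "(\<Sum>z\<in>{1..n}\<times>{1..m}. G z) = mat 1"
    unfolding G_def sum_constant_scaleR using assms by (simp add: card_cartesian_product scaleR_scaleR)
  then have "povm ({1..n} \<times> {1..m}) G"
    unfolding povm_def using assms
    by (auto simp: psd_scaleR psd_id G_def)
  moreover have "\<forall>x\<in>{1..n}. (\<Sum>y\<in>{1..m}. G (x, y)) = noisy 0 p1 M1 x"
  proof
    fix x
    have "(\<Sum>y\<in>{1..m}. G (x, y)) = (real (card {1..m}) * (1 / (real n * real m))) *\<^sub>R mat 1"
      by (simp only: G_def sum_constant_scaleR scaleR_scaleR)
    then show "(\<Sum>y\<in>{1..m}. G (x, y)) = noisy 0 p1 M1 x" using assms by (simp add: noisy_def p1_def)
  qed
  moreover have "\<forall>y\<in>{1..m}. (\<Sum>x\<in>{1..n}. G (x, y)) = noisy 0 p2 M2 y"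
  proof
    fix y
    have "(\<Sum>x\<in>{1..n}. G (x, y)) = (real (card {1..n}) * (1 / (real n * real m))) *\<^sub>R mat 1"
      by (simp only: G_def sum_constant_scaleR scaleR_scaleR)
    then show "(\<Sum>x\<in>{1..n}. G (x, y)) = noisy 0 p2 M2 y" using assms by (simp add: noisy_def p2_def)
  qed
  ultimately have "compatible n m (noisy 0 p1 M1) (noisy 0 p2 M2)"
    unfolding compatible_def by blast
  then show ?thesis unfolding jm_set_def using pd1 pd2 by blast
qed


lemma jm_bound:
  fixes M1 M2 :: "nat \<Rightarrow> complex^'d^'d"
  assumes n1: "n \<ge> 1" and m1: "m \<ge> 1" and P1: "povm {1..n} M1" and P2: "povm {1..m} M2"
    and tin: "t \<in> jm_set n m M1 M2" and tpos: "t > 0"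
  shows "t * (2 * real n * real m * Pbar n m M1 M2) + (1 - t) * (real n + real m)
         \<le> real CARD('d) + real n * real m"
proof -
  obtain p1 p2 where pd1: "prob_dist n p1" and pd2: "prob_dist m p2"
    and cp: "compatible n m (noisy t p1 M1) (noisy t p2 M2)"
    using tin unfolding jm_set_def by blast
  define N1 where "N1 = noisy t p1 M1"
  define N2 where "N2 = noisy t p2 M2"
  obtain G :: "nat \<times> nat \<Rightarrow> complex^'d^'d" where
    Gp: "povm ({1..n} \<times> {1..m}) G" and
    mg1: "\<And>x. x\<in>{1..n} \<Longrightarrow> (\<Sum>y\<in>{1..m}. G (x, y)) = N1 x" and
    mg2: "\<And>y. y\<in>{1..m} \<Longrightarrow> (\<Sum>x\<in>{1..n}. G (x, y)) = N2 y"
    using cp unfolding compatible_def N1_def N2_def by blast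
  have Gpsd: "\<And>x y. x \<in> {1..n} \<Longrightarrow> y \<in> {1..m} \<Longrightarrow> psd (G (x, y))"
    using Gp unfolding povm_def by blast
  have Gsum: "(\<Sum>x\<in>{1..n}. \<Sum>y\<in>{1..m}. G (x, y)) = mat 1"
    using Gp unfolding povm_def by (simp add: sum.cartesian_product)
  have pair: "t * op_norm (M1 x + M2 y) + (1 - t) * (p1 x + p2 y) \<le> tr (G (x, y)) + 1"
    if x: "x \<in> {1..n}" and y: "y \<in> {1..m}" for x y
  proof -
    define R where "R = (\<Sum>x'\<in>{1..n} - {x}. G (x', y))"
    define H where "H = N1 x + R"
    have psdR: "psd R" unfolding R_def by (rule psd_sum) (use Gpsd y in auto)
    have psdN1: "psd (N1 x)" unfolding mg1[OF x, symmetric] by (rule psd_sum) (use Gpsd x in auto)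
    have psdH: "psd H" unfolding H_def by (rule psd_add[OF psdN1 psdR])
    have N2y: "N2 y = G (x, y) + R"
      unfolding mg2[OF y, symmetric] R_def using x by (simp add: sum.remove)
    have eq1: "N1 x + N2 y = G (x, y) + H" by (simp add: N2y H_def algebra_simps)
    define Q where "Q = (\<Sum>x'\<in>{1..n} - {x}. \<Sum>y'\<in>{1..m} - {y}. G (x', y'))"
    have psdQ: "psd Q" unfolding Q_def
      by (rule psd_sum) (auto intro!: psd_sum Gpsd)
    have N1split: "N1 x' = G (x', y) + (\<Sum>y'\<in>{1..m} - {y}. G (x', y'))" if "x' \<in> {1..n}" for x'
      unfolding mg1[OF that, symmetric] using y by (simp add: sum.remove)
    have "mat 1 = (\<Sum>x'\<in>{1..n}. N1 x')" unfolding Gsum[symmetric] by (rule sum.cong[OF refl]) (rule mg1)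
    also have "\<dots> = N1 x + (\<Sum>x'\<in>{1..n} - {x}. N1 x')" using x by (simp add: sum.remove)
    also have "(\<Sum>x'\<in>{1..n} - {x}. N1 x') = R + Q"
      unfolding R_def Q_def sum.distrib[symmetric] by (rule sum.cong) (auto simp: N1split)
    finally have "mat 1 - H = Q" by (simp add: H_def algebra_simps)
    with psdQ have psdIH: "psd (mat 1 - H)" by simp
    have eq3: "N1 x + N2 y = t *\<^sub>R (M1 x + M2 y) + ((1 - t) * (p1 x + p2 y)) *\<^sub>R mat 1"
      by (simp add: N1_def N2_def noisy_def scaleR_add_right scaleR_add_left algebra_simps)
    have psdM: "psd (M1 x + M2 y)" using P1 P2 x y unfolding povm_def by (auto intro: psd_add)
    have "t * op_norm (M1 x + M2 y) + (1 - t) * (p1 x + p2 y) \<le> op_norm (N1 x + N2 y)"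
      unfolding eq3 by (rule opnorm_lower[OF psdM tpos])
    also have "\<dots> \<le> tr (G (x, y)) + 1" unfolding eq1 by (rule opnorm_upper[OF Gpsd[OF x y] psdH psdIH])
    finally show ?thesis .
  qed
  have "(\<Sum>x\<in>{1..n}. \<Sum>y\<in>{1..m}. t * op_norm (M1 x + M2 y) + (1 - t) * (p1 x + p2 y))
        \<le> (\<Sum>x\<in>{1..n}. \<Sum>y\<in>{1..m}. tr (G (x, y)) + 1)"
    by (intro sum_mono pair) auto
  also have "\<dots> = real CARD('d) + real n * real m"
  proof -
    have "(\<Sum>x\<in>{1..n}. \<Sum>y\<in>{1..m}. tr (G (x, y))) = tr (mat 1 :: complex^'d^'d)"
    proof -
      have "tr (\<Sum>x\<in>{1..n}. \<Sum>y\<in>{1..m}. G (x, y)) = (\<Sum>x\<in>{1..n}. tr (\<Sum>y\<in>{1..m}. G (x, y)))"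
        by (rule tr_sum) simp
      also have "\<dots> = (\<Sum>x\<in>{1..n}. \<Sum>y\<in>{1..m}. tr (G (x, y)))"
        by (rule sum.cong[OF refl], rule tr_sum) simp
      finally have "tr (\<Sum>x\<in>{1..n}. \<Sum>y\<in>{1..m}. G (x, y)) = (\<Sum>x\<in>{1..n}. \<Sum>y\<in>{1..m}. tr (G (x, y)))" .
      then show ?thesis by (simp only: Gsum)
    qed
    then show ?thesis by (simp add: sum.distrib tr_id)
  qed
  also have "(\<Sum>x\<in>{1..n}. \<Sum>y\<in>{1..m}. t * op_norm (M1 x + M2 y) + (1 - t) * (p1 x + p2 y))
      = t * (\<Sum>x\<in>{1..n}. \<Sum>y\<in>{1..m}. op_norm (M1 x + M2 y))
        + (1 - t) * (\<Sum>x\<in>{1..n}. \<Sum>y\<in>{1..m}. (p1 x + p2 y))"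
    by (simp only: sum.distrib sum_distrib_left distrib_left)
  also have "(\<Sum>x\<in>{1..n}. \<Sum>y\<in>{1..m}. (p1 x + p2 y)) = real n + real m"
    using pd1 pd2 unfolding prob_dist_def by (simp add: sum.distrib sum_distrib_left[symmetric])
  also have "(\<Sum>x\<in>{1..n}. \<Sum>y\<in>{1..m}. op_norm (M1 x + M2 y)) = 2 * real n * real m * Pbar n m M1 M2"
    using n1 m1 by (simp add: Pbar_def)
  finally show ?thesis .
qed

theorem mainTheorem5:
  fixes M1 M2 :: "nat \<Rightarrow> complex^'d^'d" and n m :: nat
  assumes "n \<ge> 1" and "m \<ge> 1"
    and "povm {1..n} M1" and "povm {1..m} M2"
    and "Pbar n m M1 M2 > (1/2) * (1 + real CARD('d) / (real n * real m))"
  shows "bdd_above (jm_set n m M1 M2) \<and>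
    jm_degree n m M1 M2 \<le> (real CARD('d) + real n * real m - (real n + real m)) /
        (2 * real n * real m * Pbar n m M1 M2 - (real n + real m))"
proof -
  define P where "P = Pbar n m M1 M2"
  define d where "d = real CARD('d)"
  define bnd where "bnd = (d + real n * real m - (real n + real m)) / (2 * real n * real m * P - (real n + real m))"
  have d1: "d \<ge> 1" unfolding d_def by (simp add: Suc_leI)
  have nm0: "real n * real m > 0" using assms(1,2) by simp
  have hP: "2 * real n * real m * P > real n * real m + d"
  proof -
    have lt0: "(1/2) * (1 + d / (real n * real m)) < P" using assms(5) by (simp add: P_def d_def)
    have lt: "(2 * (real n * real m)) * ((1/2) * (1 + d / (real n * real m))) < (2 * (real n * real m)) * P"
      by (rule mult_strict_left_mono[OF lt0]) (use nm0 in simp)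
    have eq: "(2 * (real n * real m)) * ((1/2) * (1 + d / (real n * real m))) = real n * real m + d"
      using assms(1,2) by (simp add: field_simps)
    show ?thesis using lt eq by (simp add: mult.assoc)
  qed
  have "(real n - 1) * (real m - 1) \<ge> 0" using assms(1,2) by simp
  hence num: "d + real n * real m - (real n + real m) \<ge> 0" using d1 by (simp add: algebra_simps)
  have D: "2 * real n * real m * P - (real n + real m) > 0" using hP num by linarith
  have key: "t \<le> bnd" if "t \<in> jm_set n m M1 M2" for t
  proof (cases "t = 0")
    case True then show ?thesis using num D unfolding bnd_def by simp
  next
    case False
    with that have tpos: "t > 0" unfolding jm_set_def by auto
    have "t * (2 * real n * real m * P) + (1 - t) * (real n + real m) \<le> d + real n * real m"
      using jm_bound[OF assms(1-4) that tpos] by (simp add: P_def d_def)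
    hence "t * (2 * real n * real m * P - (real n + real m)) \<le> d + real n * real m - (real n + real m)"
      by (simp add: algebra_simps)
    then show ?thesis unfolding bnd_def using D by (simp add: pos_le_divide_eq)
  qed
  have bdd: "bdd_above (jm_set n m M1 M2)" using key by (intro bdd_aboveI) blast
  have "jm_degree n m M1 M2 \<le> bnd"
    unfolding jm_degree_def using jm_zero[OF assms(1,2)] key by (intro cSup_least) auto
  then show ?thesis using bdd unfolding bnd_def P_def d_def by simp
qed

end
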